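(* Consider the networked SIR model with isolation on an undirected graph with nodes $\{1,\dots,n\}$ and adjacency matrix $A=(a_{ij})$, with fixed natural recovery rates $\delta_i>0$, infection rates $\beta_i$ and isolation times following phase-type distributions $(u_1,\Pi_i)$, where $\Pi_i\in\mathbb R^{p\times p}$ is parametrized by positive variables $\gamma_i=(\gamma_{i1},\dots,\gamma_{iq_i})$. Let a set of initially infected nodes, a budget $\bar C>0$, a level $\bar\lambda>0$, intervals $[\underline\beta_i,\bar\beta_i]\subset(0,\infty)$, boxes $\prod_{k=1}^{q_i}[\underline\gamma_{ik},\bar\gamma_{ik}]$ and cost functions $g_i,h_i$ be given. Let $w_i=-\Pi_i\mathbf 1_p$ and let $\mathcal D\Pi_i$, $\mathcal O\Pi_i$ denote the diagonal and off-diagonal parts of $\Pi_i$. Assume that for all $i$: (1) the entries of $w_i$ and of $\mathcal O\Pi_i$ are posynomials in $\gamma_i$; (2) the entries of $-\mathcal D\Pi_i$ are monomials in $\gamma_i$; (3) $g_i$ is a posynomial in $\beta_i$ and $h_i$ is a posynomial in $\gamma_i$. Let $\kappa_{i\ell}>0$, $\alpha_{i\ell}>0$ ($i\in[n]$, $\ell\in[p]$) be constants with $\kappa_{i\ell}(-\Pi_{i,\ell\ell})^{\alpha_{i\ell}}\le(-\Pi_{i,\ell\ell})+\delta_i$ for all possible values of $\gamma_i$. Let $J,B,D$ be the $n\times n$ diagonal matrices with $J_{ii}=S_i(0)$, $B_{ii}=\beta_i$, $D_{ii}=\delta_i$. Suppose $\beta_1,\dots,\beta_n,\gamma_1,\dots,\gamma_n$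 and an entrywise positive $v\in\mathbb R^{np}$ satisfy the posynomial constraints $$v^\top\Big(\bigoplus_{i=1}^n(\mathcal O\Pi_i)^\top+(JBA)\otimes(u_1\mathbf 1_p^\top)\Big)+\mathbf 1_n^\top\bigoplus_{i=1}^n w_i^\top+\mathbf 1_n^\top(D\otimes\mathbf 1_p^\top)<v^\top\bigoplus_{i=1}^n\bigoplus_{\ell=1}^p\kappa_{i\ell}(-\Pi_{i,\ell\ell})^{\alpha_{i\ell}},$$ $$\sum_{i=1}^n\big(g_i(\beta_i)+h_i(\gamma_i)\big)\le\bar C,\quad v^\top\tilde I(0)<\bar\lambda+\sigma_I(0),\quad \underline\beta_i\le\beta_i\le\bar\beta_i,\quad \gamma_i\in\prod_{k=1}^{q_i}[\underline\gamma_{ik},\bar\gamma_{ik}].$$ Then these parameters solve the resource allocation problem with isolation, i.e., the bound and budget constraints hold and the resulting SIR model with isolation satisfies $\lambda\le\bar\lambda$.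
   Context: Phase-type distribution $(\phi,\Pi)$: the distribution of the absorption time of a continuous-time Markov process on states $1,\dots,p+1$ ($1,\dots,p$ transient, $p+1$ absorbing) with generator $\begin{bmatrix}\Pi&w\\0&0\end{bmatrix}$, $w=-\Pi\mathbf 1_p$, $\Pi$ an invertible Metzler matrix with nonpositive row sums, and initial distribution $(\phi,0)$. SIR model with isolation: each node $i$ is at each time in exactly one of the states susceptible, infected, removed, with $\{0,1\}$-indicators $S_i(t),I_i(t),R_i(t)$. A susceptible node $i$ becomes infected with instantaneous rate $\beta_i\sum_j a_{ij}I_j(t)$. Once node $i$ becomes infected, it is removed after a time $\min(X_i,Y_i)$, where $X_i$ is exponential with rate $\delta_i$, $Y_i$ follows the phase-type distribution $(u_1,\Pi_i)$, independent of each other and of the rest of the process; removed nodes stay removed. At time $0$ each node is either susceptible or infected. $\sigma_I(t),\sigma_R(t)$ are the numbers of infected and removed nodes at time $t$; $\lambda=\lim_{t\to\infty}E[\sigma_R(t)]-\sigma_I(0)$. $\tilde I(0)\in\mathbb R^{np}$ stacks $\tilde I_i(0)=u_1$ if $i$ is initially infected and $0$ otherwise. A monomial in positive variables is $cx_1^{a_1}\cdots x_m^{a_m}$, $c>0$, $a_k\in\mathbb R$; a posynomial is a finite sum of monomials. $u_1$ is the first canonical basis vector of $\mathbb R^p$, $\mathbf 1_k$ the all-ones vector, $\otimes$ the Kronecker product, $\bigoplus$ the block-diagonal direct sum, $[n]=\{1,\dots,n\}$; vector inequalities are entrywise. *)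

theory Defs
  imports "HOL-Analysis.Analysis"
begin

(* Matrices are functions nat => nat => real with explicit dimensions; indices are 0-based.
   Node i in {0..<n}, phase l in {0..<p}; the stacked index of (i,l) is i*p + l.
   u_1 is the phase 0. *)

type_synonym mat = "nat \<Rightarrow> nat \<Rightarrow> real"

definition mmul :: "nat \<Rightarrow> mat \<Rightarrow> mat \<Rightarrow> mat" where
  "mmul k A B = (\<lambda>i j. \<Sum>l<k. A i l * B l j)"

definition diagm :: "(nat \<Rightarrow> real) \<Rightarrow> mat" where
  "diagm d = (\<lambda>i j. if i = j then d i else 0)"

definition mT :: "mat \<Rightarrow> mat" where
  "mT M = (\<lambda>i j. M j i)"

definition madd :: "mat \<Rightarrow> mat \<Rightarrow> mat" where
  "madd A B = (\<lambda>i j. A i j + B i j)"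

(* Kronecker product A \<otimes> B where B is an r x c matrix *)
definition kron :: "nat \<Rightarrow> nat \<Rightarrow> mat \<Rightarrow> mat \<Rightarrow> mat" where
  "kron r c A B = (\<lambda>i j. A (i div r) (j div c) * B (i mod r) (j mod c))"

(* block-diagonal direct sum of the r x c blocks F 0, F 1, ... *)
definition dsum :: "nat \<Rightarrow> nat \<Rightarrow> (nat \<Rightarrow> mat) \<Rightarrow> mat" where
  "dsum r c F = (\<lambda>i j. if i div r = j div c then F (i div r) (i mod r) (j mod c) else 0)"

definition vmul :: "nat \<Rightarrow> (nat \<Rightarrow> real) \<Rightarrow> mat \<Rightarrow> nat \<Rightarrow> real" where
  "vmul k v M = (\<lambda>j. \<Sum>i<k. v i * M i j)"

definition ones :: "nat \<Rightarrow> real" where "ones = (\<lambda>_. 1)"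
definition u1 :: "nat \<Rightarrow> real" where "u1 = (\<lambda>l. if l = 0 then 1 else 0)"
definition outer :: "(nat \<Rightarrow> real) \<Rightarrow> (nat \<Rightarrow> real) \<Rightarrow> mat" where
  "outer x y = (\<lambda>i j. x i * y j)"

(* off-diagonal part; w = - Pm 1_p *)
definition offdiag :: "mat \<Rightarrow> mat" where
  "offdiag M = (\<lambda>i j. if i = j then 0 else M i j)"
definition exitvec :: "nat \<Rightarrow> mat \<Rightarrow> nat \<Rightarrow> real" where
  "exitvec p M = (\<lambda>l. - (\<Sum>m<p. M l m))"

definition invertible_mat :: "nat \<Rightarrow> mat \<Rightarrow> bool" where
  "invertible_mat p M \<longleftrightarrow> (\<exists>N. \<forall>i<p. \<forall>j<p. (\<Sum>k<p. M i k * N k j) = (if i = j then 1 else 0))"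

definition monomial_fun :: "nat \<Rightarrow> ((nat \<Rightarrow> real) \<Rightarrow> real) \<Rightarrow> bool" where
  "monomial_fun q f \<longleftrightarrow> (\<exists>c a. c > 0 \<and>
     (\<forall>x. (\<forall>k<q. x k > 0) \<longrightarrow> f x = c * (\<Prod>k<q. x k powr a k)))"

definition posynomial_fun :: "nat \<Rightarrow> ((nat \<Rightarrow> real) \<Rightarrow> real) \<Rightarrow> bool" where
  "posynomial_fun q f \<longleftrightarrow> (\<exists>cs :: (real \<times> (nat \<Rightarrow> real)) list. (\<forall>(c,a)\<in>set cs. c > 0) \<and>
     (\<forall>x. (\<forall>k<q. x k > 0) \<longrightarrow> f x = (\<Sum>(c,a)\<leftarrow>cs. c * (\<Prod>k<q. x k powr a k))))"

(* local node state: susceptible, infected in isolation phase l, removed *)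
datatype lstate = Sus | Inf nat | Rem

definition sir_states :: "nat \<Rightarrow> nat \<Rightarrow> (nat \<Rightarrow> lstate) set" where
  "sir_states n p = {x. (\<forall>i<n. \<forall>l. x i = Inf l \<longrightarrow> l < p) \<and> (\<forall>i. n \<le> i \<longrightarrow> x i = Rem)}"

definition is_inf :: "lstate \<Rightarrow> real" where
  "is_inf s = (case s of Inf _ \<Rightarrow> 1 | _ \<Rightarrow> 0)"

(* The removal time min(X_i,Y_i) is handled by: phase l -> phase m at rate Pi_i(l,m),
   phase l -> removed at rate w_i(l) + delta_i (absorption of Y_i or firing of X_i). *)
definition node_rate :: "nat \<Rightarrow> nat \<Rightarrow> mat \<Rightarrow> (nat \<Rightarrow> real) \<Rightarrow> (nat \<Rightarrow> real)
     \<Rightarrow> (nat \<Rightarrow> mat) \<Rightarrow> (nat \<Rightarrow> lstate) \<Rightarrow> nat \<Rightarrow> lstate \<Rightarrow> real" where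
  "node_rate n p A beta delta Pm x i s' =
     (case x i of
        Sus \<Rightarrow> (case s' of Inf m \<Rightarrow> (if m = 0 then beta i * (\<Sum>j<n. A i j * is_inf (x j)) else 0)
                         | _ \<Rightarrow> 0)
      | Inf l \<Rightarrow> (case s' of Inf m \<Rightarrow> (if m \<noteq> l then Pm i l m else 0)
                           | Rem \<Rightarrow> exitvec p (Pm i) l + delta i
                           | Sus \<Rightarrow> 0)
      | Rem \<Rightarrow> 0)"

definition sir_rate :: "nat \<Rightarrow> nat \<Rightarrow> mat \<Rightarrow> (nat \<Rightarrow> real) \<Rightarrow> (nat \<Rightarrow> real)
     \<Rightarrow> (nat \<Rightarrow> mat) \<Rightarrow> (nat \<Rightarrow> lstate) \<Rightarrow> (nat \<Rightarrow> lstate) \<Rightarrow> real" where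
  "sir_rate n p A beta delta Pm x y =
     (if x \<noteq> y \<and> (\<exists>i<n. y = x(i := y i))
      then node_rate n p A beta delta Pm x (THE i. i < n \<and> x i \<noteq> y i) (y (THE i. i < n \<and> x i \<noteq> y i))
      else 0)"

definition sir_gen :: "nat \<Rightarrow> nat \<Rightarrow> mat \<Rightarrow> (nat \<Rightarrow> real) \<Rightarrow> (nat \<Rightarrow> real)
     \<Rightarrow> (nat \<Rightarrow> mat) \<Rightarrow> (nat \<Rightarrow> lstate) \<Rightarrow> (nat \<Rightarrow> lstate) \<Rightarrow> real" where
  "sir_gen n p A beta delta Pm x y =
     (if x = y then - (\<Sum>z\<in>sir_states n p - {x}. sir_rate n p A beta delta Pm x z)
      else sir_rate n p A beta delta Pm x y)"

fun gpow :: "'s set \<Rightarrow> ('s \<Rightarrow> 's \<Rightarrow> real) \<Rightarrow> nat \<Rightarrow> 's \<Rightarrow> 's \<Rightarrow> real" where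
  "gpow S Q 0 x y = (if x = y then 1 else 0)"
| "gpow S Q (Suc k) x y = (\<Sum>z\<in>S. gpow S Q k x z * Q z y)"

definition ctmc_trans :: "'s set \<Rightarrow> ('s \<Rightarrow> 's \<Rightarrow> real) \<Rightarrow> real \<Rightarrow> 's \<Rightarrow> 's \<Rightarrow> real" where
  "ctmc_trans S Q t x y = (\<Sum>k. t ^ k / fact k * gpow S Q k x y)"

definition sir_init :: "nat \<Rightarrow> nat set \<Rightarrow> nat \<Rightarrow> lstate" where
  "sir_init n I0 = (\<lambda>i. if n \<le> i then Rem else if i \<in> I0 then Inf 0 else Sus)"

definition sir_ERem :: "nat \<Rightarrow> nat \<Rightarrow> mat \<Rightarrow> (nat \<Rightarrow> real) \<Rightarrow> (nat \<Rightarrow> real)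
     \<Rightarrow> (nat \<Rightarrow> mat) \<Rightarrow> nat set \<Rightarrow> real \<Rightarrow> real" where
  "sir_ERem n p A beta delta Pm I0 t =
     (\<Sum>y\<in>sir_states n p.
        ctmc_trans (sir_states n p) (sir_gen n p A beta delta Pm) t (sir_init n I0) y
        * real (card {i. i < n \<and> y i = Rem}))"

end

theory Submission
  imports Defs
begin


definition Km :: "('s \<Rightarrow> 's \<Rightarrow> real) \<Rightarrow> real \<Rightarrow> 's \<Rightarrow> 's \<Rightarrow> real" where
  "Km Q c x y = Q x y + (if x = y then c else 0)"

lemma binom_step:
  fixes d :: real and s :: "nat \<Rightarrow> real"
  shows "(\<Sum>j\<le>k. of_nat (k choose j) * d^(k-j) * s (Suc j)) + d * (\<Sum>j\<le>k. of_nat (k choose j) * d^(k-j) * s j)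
       = (\<Sum>j\<le>Suc k. of_nat (Suc k choose j) * d^(Suc k - j) * s j)"
proof -
  have e1: "d * (\<Sum>j\<le>k. of_nat (k choose j) * d^(k-j) * s j) = (\<Sum>j\<le>Suc k. of_nat (k choose j) * d^(Suc k - j) * s j)"
  proof -
    have "d * (\<Sum>j\<le>k. of_nat (k choose j) * d^(k-j) * s j) = (\<Sum>j\<le>k. of_nat (k choose j) * d^(Suc k - j) * s j)"
      unfolding sum_distrib_left
      by (rule sum.cong) (auto simp: Suc_diff_le)
    also have "\<dots> = (\<Sum>j\<le>Suc k. of_nat (k choose j) * d^(Suc k - j) * s j)"
      by simp
    finally show ?thesis .
  qed
  have e2: "(\<Sum>j\<le>Suc k. of_nat (k choose j) * d^(Suc k - j) * s j)
      = d^(Suc k) * s 0 + (\<Sum>j\<le>k. of_nat (k choose Suc j) * d^(k - j) * s (Suc j))"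
    by (subst sum.atMost_Suc_shift) simp
  have e3: "(\<Sum>j\<le>Suc k. of_nat (Suc k choose j) * d^(Suc k - j) * s j)
      = d^(Suc k) * s 0 + (\<Sum>j\<le>k. (of_nat (k choose j) + of_nat (k choose Suc j)) * d^(k - j) * s (Suc j))"
    by (subst sum.atMost_Suc_shift) simp
  show ?thesis unfolding e1 e2 e3
    by (simp add: algebra_simps sum.distrib)
qed

lemma Km_sum:
  assumes "finite S" "y \<in> S"
  shows "(\<Sum>z\<in>S. f z * Q z y) = (\<Sum>z\<in>S. f z * Km Q c z y) - c * f y"
proof -
  have "(\<Sum>z\<in>S. f z * Km Q c z y) = (\<Sum>z\<in>S. f z * Q z y + (if z = y then c * f z else 0))"
    unfolding Km_def by (rule sum.cong) (auto simp: algebra_simps)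
  also have "\<dots> = (\<Sum>z\<in>S. f z * Q z y) + (\<Sum>z\<in>S. if z = y then c * f z else 0)"
    by (rule sum.distrib)
  also have "(\<Sum>z\<in>S. if z = y then c * f z else 0) = c * f y" using assms by simp
  finally show ?thesis by simp
qed

lemma gpow_binom:
  assumes S: "finite S" and y: "y \<in> S"
  shows "gpow S Q k x y = (\<Sum>j\<le>k. of_nat (k choose j) * (-c)^(k-j) * gpow S (Km Q c) j x y)"
  using y
proof (induction k arbitrary: y)
  case 0
  then show ?case by simp
next
  case (Suc k)
  have "gpow S Q (Suc k) x y = (\<Sum>z\<in>S. (\<Sum>j\<le>k. of_nat (k choose j) * (-c)^(k-j) * gpow S (Km Q c) j x z) * Q z y)"
    using Suc.IH by simp
  also have "\<dots> = (\<Sum>j\<le>k. of_nat (k choose j) * (-c)^(k-j) * (\<Sum>z\<in>S. gpow S (Km Q c) j x z * Q z y))"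
    by (simp add: sum_distrib_right sum_distrib_left mult.assoc sum.swap[of _ S])
  also have "\<dots> = (\<Sum>j\<le>k. of_nat (k choose j) * (-c)^(k-j) * (gpow S (Km Q c) (Suc j) x y - c * gpow S (Km Q c) j x y))"
    using Km_sum[OF S Suc.prems] by simp
  also have "\<dots> = (\<Sum>j\<le>k. of_nat (k choose j) * (-c)^(k-j) * gpow S (Km Q c) (Suc j) x y)
       + (-c) * (\<Sum>j\<le>k. of_nat (k choose j) * (-c)^(k-j) * gpow S (Km Q c) j x y)"
    by (simp only: sum_distrib_left flip: sum.distrib) (rule sum.cong, simp_all add: algebra_simps)
  also have "\<dots> = (\<Sum>j\<le>Suc k. of_nat (Suc k choose j) * (-c)^(Suc k-j) * gpow S (Km Q c) j x y)"
    by (rule binom_step[of k "-c" "\<lambda>j. gpow S (Km Q c) j x y"])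
  finally show ?case .
qed


lemma gpow_nonneg:
  assumes "\<forall>z\<in>S. \<forall>w\<in>S. K z w \<ge> 0" "y \<in> S"
  shows "gpow S K j x y \<ge> 0"
  using assms(2)
proof (induction j arbitrary: y)
  case 0 then show ?case by simp
next
  case (Suc j)
  then show ?case using assms(1) by (auto intro!: sum_nonneg)
qed

lemma gpow_bound:
  assumes S: "finite S" and B: "\<forall>z\<in>S. \<forall>w\<in>S. \<bar>K z w\<bar> \<le> B" "0 \<le> B" and y: "y \<in> S"
  shows "\<bar>gpow S K j x y\<bar> \<le> (real (card S) * B + 1)^j"
  using y
proof (induction j arbitrary: y)
  case 0 then show ?case by simp
next
  case (Suc j)
  let ?M = "real (card S) * B + 1"
  have "\<bar>gpow S K (Suc j) x y\<bar> \<le> (\<Sum>z\<in>S. \<bar>gpow S K j x z * K z y\<bar>)"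
    by (simp add: sum_abs)
  also have "\<dots> \<le> (\<Sum>z\<in>S. ?M^j * B)"
    using Suc B by (intro sum_mono) (auto simp: abs_mult intro!: mult_mono)
  also have "\<dots> = real (card S) * B * ?M^j" by simp
  also have "\<dots> \<le> ?M * ?M^j"
    by (intro mult_right_mono) (auto simp: B)
  finally show ?case by simp
qed

lemma exp_real_series: "exp (x::real) = (\<Sum>n. x^n / fact n)"
  using sums_unique[OF exp_converges[of x]] by (simp add: divide_inverse mult.commute)

lemma summable_expbound:
  fixes f :: "nat \<Rightarrow> real"
  assumes "\<And>n. \<bar>f n\<bar> \<le> r^n / fact n"
  shows "summable (\<lambda>n. norm (f n))"
proof (rule summable_comparison_test'[of "\<lambda>n. inverse (fact n) * r^n"])
  show "summable (\<lambda>n. inverse (fact n) * r^n)" by (rule summable_exp)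
  fix n show "norm (norm (f n)) \<le> inverse (fact n) * r^n" using assms[of n] by (simp add: divide_inverse mult.commute)
qed

lemma ctmc_unif:
  assumes S: "finite S" and y: "y \<in> S"
  shows "ctmc_trans S Q t x y = exp (-c*t) * (\<Sum>j. t^j / fact j * gpow S (Km Q c) j x y)"
proof -
  define K where "K = Km Q c"
  define B where "B = (\<Sum>z\<in>S. \<Sum>w\<in>S. \<bar>K z w\<bar>)"
  define M where "M = real (card S) * B + 1"
  have Bb: "\<forall>z\<in>S. \<forall>w\<in>S. \<bar>K z w\<bar> \<le> B"
  proof (intro ballI)
    fix z w assume zw: "z \<in> S" "w \<in> S"
    have "\<bar>K z w\<bar> \<le> (\<Sum>w\<in>S. \<bar>K z w\<bar>)" using S zw by (intro member_le_sum) auto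
    also have "\<dots> \<le> B" unfolding B_def using S zw
      by (intro member_le_sum[where f="\<lambda>z. \<Sum>w\<in>S. \<bar>K z w\<bar>"]) (auto intro: sum_nonneg)
    finally show "\<bar>K z w\<bar> \<le> B" .
  qed
  have B0: "0 \<le> B" unfolding B_def by (auto intro: sum_nonneg)
  have bnd: "\<And>j. \<bar>gpow S K j x y\<bar> \<le> M^j"
    using gpow_bound[OF S Bb B0 y] unfolding M_def by blast
  define a where "a = (\<lambda>i. (-c*t)^i / fact i)"
  define b where "b = (\<lambda>j. t^j / fact j * gpow S K j x y)"
  have sa: "summable (\<lambda>i. norm (a i))"
    by (rule summable_expbound[where r="\<bar>c*t\<bar>"]) (simp add: a_def abs_mult power_abs)
  have sb: "summable (\<lambda>i. norm (b i))"
  proof (rule summable_expbound[where r="\<bar>t\<bar>*M"])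
    fix n
    have "\<bar>b n\<bar> = \<bar>t\<bar>^n / fact n * \<bar>gpow S K n x y\<bar>" by (simp add: b_def abs_mult power_abs)
    also have "\<dots> \<le> \<bar>t\<bar>^n / fact n * M^n" by (intro mult_left_mono bnd) auto
    finally show "\<bar>b n\<bar> \<le> (\<bar>t\<bar>*M)^n / fact n" by (simp add: power_mult_distrib)
  qed
  have ea: "exp (-c*t) = (\<Sum>i. a i)" unfolding a_def by (rule exp_real_series)
  have trm: "t^k / fact k * gpow S Q k x y = (\<Sum>i\<le>k. a i * b (k - i))" for k
  proof -
    have "t^k / fact k * gpow S Q k x y = (\<Sum>j\<le>k. t^k / fact k * (of_nat (k choose j) * (-c)^(k-j) * gpow S K j x y))"
      unfolding gpow_binom[OF S y, of Q k x c] K_def by (simp add: sum_distrib_left)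
    also have "\<dots> = (\<Sum>j\<le>k. a (k - j) * b j)"
    proof (rule sum.cong)
      fix j assume "j \<in> {..k}"
      then have jk: "j \<le> k" by simp
      have tk: "t^k = t^(k-j) * t^j" using jk by (simp flip: power_add)
      have ct: "(-c*t)^(k-j) = (-c)^(k-j) * t^(k-j)" by (rule power_mult_distrib)
      show "t^k / fact k * (of_nat (k choose j) * (-c)^(k-j) * gpow S K j x y) = a (k - j) * b j"
        unfolding a_def b_def binomial_fact[OF jk] tk ct
        by (simp add: power_mult_distrib field_simps)
    qed simp
    also have "\<dots> = (\<Sum>i\<le>k. a i * b (k - i))"
      by (rule sum.reindex_bij_witness[where i="\<lambda>i. k - i" and j="\<lambda>i. k - i"]) auto
    finally show ?thesis .
  qed
  have "ctmc_trans S Q t x y = (\<Sum>k. \<Sum>i\<le>k. a i * b (k - i))"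
    unfolding ctmc_trans_def using trm by simp
  also have "\<dots> = (\<Sum>i. a i) * (\<Sum>j. b j)" using Cauchy_product[OF sa sb] by simp
  finally show ?thesis unfolding ea b_def K_def by simp
qed



lemma gpow_series_summable:
  assumes S: "finite S" and y: "y \<in> S"
  shows "summable (\<lambda>j. t^j / fact j * gpow S K j x y)"
proof -
  define B where "B = (\<Sum>z\<in>S. \<Sum>w\<in>S. \<bar>K z w\<bar>)"
  define M where "M = real (card S) * B + 1"
  have Bb: "\<forall>z\<in>S. \<forall>w\<in>S. \<bar>K z w\<bar> \<le> B"
  proof (intro ballI)
    fix z w assume zw: "z \<in> S" "w \<in> S"
    have "\<bar>K z w\<bar> \<le> (\<Sum>w\<in>S. \<bar>K z w\<bar>)" using S zw by (intro member_le_sum) auto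
    also have "\<dots> \<le> B" unfolding B_def using S zw
      by (intro member_le_sum[where f="\<lambda>z. \<Sum>w\<in>S. \<bar>K z w\<bar>"]) (auto intro: sum_nonneg)
    finally show "\<bar>K z w\<bar> \<le> B" .
  qed
  have B0: "0 \<le> B" unfolding B_def by (auto intro: sum_nonneg)
  have bnd: "\<And>j. \<bar>gpow S K j x y\<bar> \<le> M^j"
    using gpow_bound[OF S Bb B0 y] unfolding M_def by blast
  have "summable (\<lambda>j. norm (t^j / fact j * gpow S K j x y))"
  proof (rule summable_expbound[where r="\<bar>t\<bar>*M"])
    fix n
    have "\<bar>t^n / fact n * gpow S K n x y\<bar> = \<bar>t\<bar>^n / fact n * \<bar>gpow S K n x y\<bar>" by (simp add: abs_mult power_abs)
    also have "\<dots> \<le> \<bar>t\<bar>^n / fact n * M^n" by (intro mult_left_mono bnd) auto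
    finally show "\<bar>t^n / fact n * gpow S K n x y\<bar> \<le> (\<bar>t\<bar>*M)^n / fact n" by (simp add: power_mult_distrib)
  qed
  then show ?thesis by (rule summable_norm_cancel)
qed

lemma ctmc_expect:
  assumes S: "finite S"
  shows "(\<Sum>y\<in>S. ctmc_trans S Q t x y * f y)
       = exp (-c*t) * (\<Sum>j. t^j / fact j * (\<Sum>y\<in>S. gpow S (Km Q c) j x y * f y))"
proof -
  have "(\<Sum>y\<in>S. ctmc_trans S Q t x y * f y)
      = (\<Sum>y\<in>S. exp (-c*t) * (\<Sum>j. t^j / fact j * gpow S (Km Q c) j x y * f y))"
  proof (rule sum.cong)
    fix y assume y: "y \<in> S"
    show "ctmc_trans S Q t x y * f y = exp (-c*t) * (\<Sum>j. t^j / fact j * gpow S (Km Q c) j x y * f y)"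
      unfolding ctmc_unif[OF S y, of Q t x c]
      using suminf_mult2[OF gpow_series_summable[OF S y, of t "Km Q c" x], of "f y"] by simp
  qed simp
  also have "\<dots> = exp (-c*t) * (\<Sum>y\<in>S. \<Sum>j. t^j / fact j * gpow S (Km Q c) j x y * f y)"
    by (simp add: sum_distrib_left)
  also have "(\<Sum>y\<in>S. \<Sum>j. t^j / fact j * gpow S (Km Q c) j x y * f y)
     = (\<Sum>j. \<Sum>y\<in>S. t^j / fact j * gpow S (Km Q c) j x y * f y)"
    by (rule suminf_sum[symmetric]) (intro summable_mult2 gpow_series_summable[OF S])
  also have "\<dots> = (\<Sum>j. t^j / fact j * (\<Sum>y\<in>S. gpow S (Km Q c) j x y * f y))"
    by (simp add: sum_distrib_left mult.assoc)
  finally show ?thesis .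
qed

lemma gpow_Suc_sum:
  assumes S: "finite S"
  shows "(\<Sum>y\<in>S. gpow S K (Suc j) x y * f y) = (\<Sum>z\<in>S. gpow S K j x z * (\<Sum>y\<in>S. K z y * f y))"
proof -
  have "(\<Sum>y\<in>S. gpow S K (Suc j) x y * f y) = (\<Sum>y\<in>S. \<Sum>z\<in>S. gpow S K j x z * K z y * f y)"
    by (simp add: sum_distrib_right)
  also have "\<dots> = (\<Sum>z\<in>S. \<Sum>y\<in>S. gpow S K j x z * K z y * f y)" by (rule sum.swap)
  also have "\<dots> = (\<Sum>z\<in>S. gpow S K j x z * (\<Sum>y\<in>S. K z y * f y))"
    by (simp add: sum_distrib_left mult.assoc)
  finally show ?thesis .
qed

lemma gpow_reach:
  assumes closed: "\<forall>z\<in>Rc. \<forall>w\<in>S - Rc. K z w = 0" and x: "x \<in> Rc" and y: "y \<in> S - Rc"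
  shows "gpow S K j x y = 0"
  using y
proof (induction j arbitrary: y)
  case 0 then show ?case using x by auto
next
  case (Suc j)
  have "\<forall>z\<in>S. gpow S K j x z * K z y = 0"
    using Suc closed by (metis Diff_iff mult_eq_0_iff)
  then show ?case by (auto intro!: sum.neutral)
qed

locale reachc =
  fixes S :: "'a set" and Rc :: "'a set" and K :: "'a \<Rightarrow> 'a \<Rightarrow> real" and x :: 'a
  assumes S: "finite S" and RS: "Rc \<subseteq> S" and closed: "\<forall>z\<in>Rc. \<forall>w\<in>S - Rc. K z w = 0"
    and x: "x \<in> Rc" and Kpos: "\<forall>z\<in>S. \<forall>w\<in>S. K z w \<ge> 0"
begin

definition Ef :: "nat \<Rightarrow> ('a \<Rightarrow> real) \<Rightarrow> real" where
  "Ef j f = (\<Sum>y\<in>S. gpow S K j x y * f y)"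

lemma Ef_0: "Ef 0 f = f x"
proof -
  have "Ef 0 f = (\<Sum>y\<in>S. if x = y then f y else 0)" unfolding Ef_def by (rule sum.cong) auto
  also have "\<dots> = f x" using x RS S by (subst sum.delta') auto
  finally show ?thesis .
qed

lemma Ef_cmp:
  assumes "\<forall>z\<in>Rc. F z \<le> G z"
  shows "(\<Sum>z\<in>S. gpow S K j x z * F z) \<le> (\<Sum>z\<in>S. gpow S K j x z * G z)"
proof (rule sum_mono)
  fix z assume z: "z \<in> S"
  show "gpow S K j x z * F z \<le> gpow S K j x z * G z"
  proof (cases "z \<in> Rc")
    case True
    then show ?thesis using assms gpow_nonneg[OF Kpos z] by (intro mult_left_mono) auto
  next
    case False
    then show ?thesis using gpow_reach[OF closed x, of z] z by simp
  qed
qed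

lemma Ef_mono: "\<forall>z\<in>Rc. f z \<le> g z \<Longrightarrow> Ef j f \<le> Ef j g"
  unfolding Ef_def by (rule Ef_cmp)

lemma Ef_super:
  assumes "\<forall>z\<in>Rc. (\<Sum>y\<in>S. K z y * f y) \<le> c * f z"
  shows "Ef (Suc j) f \<le> c * Ef j f"
proof -
  have "Ef (Suc j) f = (\<Sum>z\<in>S. gpow S K j x z * (\<Sum>y\<in>S. K z y * f y))"
    unfolding Ef_def by (rule gpow_Suc_sum[OF S])
  also have "\<dots> \<le> (\<Sum>z\<in>S. gpow S K j x z * (c * f z))" by (rule Ef_cmp) (use assms in auto)
  also have "\<dots> = c * Ef j f" unfolding Ef_def sum_distrib_left by (rule sum.cong) auto
  finally show ?thesis .
qed

lemma Ef_sub: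
  assumes "\<forall>z\<in>Rc. c * f z \<le> (\<Sum>y\<in>S. K z y * f y)"
  shows "c * Ef j f \<le> Ef (Suc j) f"
proof -
  have "c * Ef j f = (\<Sum>z\<in>S. gpow S K j x z * (c * f z))" unfolding Ef_def sum_distrib_left by (rule sum.cong) auto
  also have "\<dots> \<le> (\<Sum>z\<in>S. gpow S K j x z * (\<Sum>y\<in>S. K z y * f y))" by (rule Ef_cmp) (use assms in auto)
  also have "\<dots> = Ef (Suc j) f"
    unfolding Ef_def by (rule gpow_Suc_sum[OF S, symmetric])
  finally show ?thesis .
qed

lemma Ef_super_pow:
  assumes "\<forall>z\<in>Rc. (\<Sum>y\<in>S. K z y * f y) \<le> c * f z" "0 \<le> c"
  shows "Ef j f \<le> c^j * f x"
proof (induction j)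
  case 0 then show ?case by (simp add: Ef_0)
next
  case (Suc j)
  have "Ef (Suc j) f \<le> c * Ef j f" by (rule Ef_super[OF assms(1)])
  also have "\<dots> \<le> c * (c^j * f x)" using Suc assms(2) by (intro mult_left_mono)
  finally show ?case by simp
qed

end


lemma exp_sums_real: "(\<lambda>n. x^n / fact n) sums exp (x::real)"
  using exp_converges[of x] by (simp add: divide_inverse mult.commute)

lemma poisson_limit:
  fixes e :: "nat \<Rightarrow> real" and c V0 :: real
  assumes c: "c > 0" and e0: "0 \<le> e 0" and inc: "\<forall>j. c * e j \<le> e (Suc j)" and bnd: "\<forall>j. e j \<le> c^j * V0"
  shows "\<exists>L. ((\<lambda>t. exp(-c*t) * (\<Sum>j. t^j/fact j * e j)) \<longlongrightarrow> L) at_top \<and> L \<le> V0"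
proof -
  define a where "a j = e j / c^j" for j
  have e_eq: "e j = c^j * a j" for j using c unfolding a_def by simp
  have ainc: "incseq a"
  proof (rule incseq_SucI)
    fix j
    have "c * (c^j * a j) \<le> c^(Suc j) * a (Suc j)" using inc[rule_format, of j] unfolding e_eq .
    then have "c^(Suc j) * a j \<le> c^(Suc j) * a (Suc j)" by (simp add: mult.assoc)
    then show "a j \<le> a (Suc j)" using c by (simp del: power_Suc)
  qed
  have abnd: "\<forall>j. a j \<le> V0"
  proof
    fix j
    have "c^j * a j \<le> c^j * V0" using bnd[rule_format, of j] unfolding e_eq .
    then show "a j \<le> V0" using c by simp
  qed
  have a0: "0 \<le> a j" for j
  proof -
    have "0 \<le> a 0" using e0 unfolding a_def by simp
    also have "a 0 \<le> a j" using ainc by (simp add: incseqD)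
    finally show ?thesis .
  qed
  obtain L where lim: "a \<longlonglongrightarrow> L" and aL: "\<forall>i. a i \<le> L"
    using incseq_convergent[OF ainc abnd] by blast
  have LV: "L \<le> V0" using LIMSEQ_le_const2[OF lim] abnd by blast
  define u where "u t j = (c*t)^j / fact j" for t :: real and j
  have usums: "u t sums exp (c*t)" for t unfolding u_def by (rule exp_sums_real)
  have unorm: "summable (\<lambda>j. norm (u t j))" for t
    by (rule summable_expbound[where r="\<bar>c*t\<bar>"]) (simp add: u_def abs_mult power_abs)
  have suma: "summable (\<lambda>j. u t j * f j)" if "\<forall>j. \<bar>f j\<bar> \<le> B" for t f B
  proof (rule summable_comparison_test'[of "\<lambda>j. B * norm (u t j)"])
    show "summable (\<lambda>j. B * norm (u t j))" using unorm[of t] by (rule summable_mult)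
    fix j show "norm (u t j * f j) \<le> B * norm (u t j)"
      using that by (simp add: abs_mult mult.commute mult_right_mono)
  qed
  have aabs: "\<forall>j. \<bar>a j\<bar> \<le> L" using a0 aL by auto
  have rew: "(\<lambda>t. exp(-c*t) * (\<Sum>j. t^j/fact j * e j)) = (\<lambda>t. exp(-c*t) * (\<Sum>j. u t j * a j))"
    by (rule ext) (simp add: u_def e_eq power_mult_distrib mult_ac)
  have upos: "t \<ge> 0 \<Longrightarrow> 0 \<le> u t j" for t j unfolding u_def using c by simp
  have upper: "exp(-c*t) * (\<Sum>j. u t j * a j) \<le> L" if t: "t \<ge> 0" for t
  proof -
    have "(\<Sum>j. u t j * a j) \<le> (\<Sum>j. u t j * L)"
      using aL upos[OF t] by (intro suminf_le suma[OF aabs] summable_mult2 sums_summable[OF usums])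
        (auto intro: mult_left_mono)
    also have "\<dots> = exp (c*t) * L" using sums_unique[OF usums[of t]] suminf_mult2[OF sums_summable[OF usums[of t]], of L] by simp
    finally have "exp(-c*t) * (\<Sum>j. u t j * a j) \<le> exp(-c*t) * (exp (c*t) * L)" by (intro mult_left_mono) auto
    also have "\<dots> = L" by (simp add: mult.assoc[symmetric] flip: exp_add)
    finally show ?thesis .
  qed
  have lower: "a N - a N * (exp(-c*t) * (\<Sum>j<N. u t j)) \<le> exp(-c*t) * (\<Sum>j. u t j * a j)" if t: "t \<ge> 0" for t N
  proof -
    have bd2: "\<forall>j. \<bar>a j - a N\<bar> \<le> 2 * L"
    proof
      fix j show "\<bar>a j - a N\<bar> \<le> 2 * L" using a0[of j] a0[of N] aL[rule_format, of j] aL[rule_format, of N] by (simp add: abs_if)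
    qed
    have s1: "summable (\<lambda>j. u t j * (a j - a N))" by (rule suma[OF bd2])
    have "(\<Sum>j<N. u t j * (a j - a N)) \<le> (\<Sum>j. u t j * (a j - a N))"
    proof (rule sum_le_suminf[OF s1])
      fix n assume "n \<in> - {..<N}"
      then have "a N \<le> a n" using ainc by (auto intro: incseqD)
      then show "0 \<le> u t n * (a n - a N)" using upos[OF t] by simp
    qed simp
    moreover have "(\<Sum>j<N. u t j * (-a N)) \<le> (\<Sum>j<N. u t j * (a j - a N))"
      using a0 upos[OF t] by (intro sum_mono mult_left_mono) auto
    moreover have "(\<Sum>j. u t j * a j) = (\<Sum>j. u t j * (a j - a N)) + (\<Sum>j. u t j * a N)"
      using suminf_add[OF s1 summable_mult2[OF sums_summable[OF usums[of t]], of "a N"]]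
      by (simp add: algebra_simps)
    moreover have "(\<Sum>j. u t j * a N) = exp (c*t) * a N"
      using sums_unique[OF usums[of t]] suminf_mult2[OF sums_summable[OF usums[of t]], of "a N"] by simp
    moreover have "(\<Sum>j<N. u t j * (-a N)) = - (a N * (\<Sum>j<N. u t j))"
      by (simp add: sum_distrib_left sum_negf mult_ac)
    ultimately have "exp (c*t) * a N - a N * (\<Sum>j<N. u t j) \<le> (\<Sum>j. u t j * a j)"
      by linarith
    then have l1: "exp(-c*t) * (exp (c*t) * a N - a N * (\<Sum>j<N. u t j)) \<le> exp(-c*t) * (\<Sum>j. u t j * a j)"
      by (intro mult_left_mono) auto
    have l2: "exp(-c*t) * (exp (c*t) * a N - a N * (\<Sum>j<N. u t j)) = a N - a N * (exp(-c*t) * (\<Sum>j<N. u t j))"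
    proof -
      have ee: "exp(-c*t) * exp(c*t) = 1" by (simp flip: exp_add)
      have "exp(-c*t) * (exp (c*t) * a N - a N * (\<Sum>j<N. u t j)) = (exp(-c*t) * exp (c*t)) * a N - a N * (exp(-c*t) * (\<Sum>j<N. u t j))"
        by (simp only: right_diff_distrib mult_ac)
      then show ?thesis unfolding ee by simp
    qed
    show ?thesis using l1 unfolding l2 .
  qed
  have g0: "((\<lambda>t. exp(-c*t) * (\<Sum>j<N. u t j)) \<longlongrightarrow> 0) at_top" for N
  proof -
    have ct: "filterlim (\<lambda>t::real. c * t) at_top at_top"
      by (rule filterlim_tendsto_pos_mult_at_top[OF tendsto_const c filterlim_ident])
    have "((\<lambda>t. (c*t)^j / exp (c*t) / fact j) \<longlongrightarrow> 0) at_top" for j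
      using tendsto_divide[OF filterlim_compose[OF tendsto_power_div_exp_0[of j] ct] tendsto_const[of "fact j"]]
      by simp
    then have "((\<lambda>t. \<Sum>j<N. (c*t)^j / exp (c*t) / fact j) \<longlongrightarrow> (\<Sum>j<N. 0)) at_top"
      by (intro tendsto_sum) auto
    moreover have "(\<lambda>t. \<Sum>j<N. (c*t)^j / exp (c*t) / fact j) = (\<lambda>t. exp(-c*t) * (\<Sum>j<N. u t j))"
      by (rule ext) (simp add: u_def sum_distrib_left exp_minus field_simps)
    ultimately show ?thesis by simp
  qed
  have "((\<lambda>t. exp(-c*t) * (\<Sum>j. u t j * a j)) \<longlongrightarrow> L) at_top"
  proof (rule order_tendstoI)
    fix y assume "y < L"
    from order_tendstoD(1)[OF lim this] obtain N where N: "y < a N"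
      by (auto simp: eventually_sequentially)
    have "((\<lambda>t. a N - a N * (exp(-c*t) * (\<Sum>j<N. u t j))) \<longlongrightarrow> a N - a N * 0) at_top"
      by (intro tendsto_intros g0)
    then have "eventually (\<lambda>t. y < a N - a N * (exp(-c*t) * (\<Sum>j<N. u t j))) at_top"
      using N by (intro order_tendstoD(1)) auto
    then show "eventually (\<lambda>t. y < exp(-c*t) * (\<Sum>j. u t j * a j)) at_top"
      using eventually_ge_at_top[of 0]
    proof eventually_elim
        case (elim t)
        then show ?case using lower[OF elim(2), of N] by linarith
      qed
  next
    fix y assume Ly: "L < y"
    show "eventually (\<lambda>t. exp(-c*t) * (\<Sum>j. u t j * a j) < y) at_top"
      using eventually_ge_at_top[of 0] proof eventually_elim
        case (elim t)
        then show ?case using upper[OF elim] Ly by linarith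
      qed
  qed
  then show ?thesis using LV rew by auto
qed


definition LS :: "nat \<Rightarrow> lstate set" where
  "LS p = insert Sus (insert Rem (Inf ` {..<p}))"

lemma finite_LS: "finite (LS p)" unfolding LS_def by simp

lemma state_LS: "x \<in> sir_states n p \<Longrightarrow> i < n \<Longrightarrow> x i \<in> LS p"
  unfolding sir_states_def LS_def by (cases "x i") auto

lemma finite_states: "finite (sir_states n p)"
proof -
  let ?e = "\<lambda>f i. if i < n then f i else Rem"
  have "sir_states n p \<subseteq> ?e ` (PiE {..<n} (\<lambda>_. LS p))"
  proof
    fix x assume x: "x \<in> sir_states n p"
    have "x = ?e (restrict x {..<n})" using x unfolding sir_states_def by (auto simp: fun_eq_iff)
    moreover have "restrict x {..<n} \<in> PiE {..<n} (\<lambda>_. LS p)" using state_LS[OF x] by auto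
    ultimately show "x \<in> ?e ` (PiE {..<n} (\<lambda>_. LS p))" by blast
  qed
  moreover have "finite (?e ` (PiE {..<n} (\<lambda>_. LS p)))"
    by (intro finite_imageI finite_PiE finite_LS) auto
  ultimately show ?thesis by (rule finite_subset)
qed

lemma states_upd: "x \<in> sir_states n p \<Longrightarrow> i < n \<Longrightarrow> s \<in> LS p \<Longrightarrow> x(i := s) \<in> sir_states n p"
  unfolding sir_states_def LS_def by auto

lemma rate_upd:
  assumes "i < n" "s \<noteq> x i"
  shows "sir_rate n p A beta delta Pm x (x(i := s)) = node_rate n p A beta delta Pm x i s"
proof -
  have th: "(THE i'. i' < n \<and> x i' \<noteq> (x(i := s)) i') = i"
    using assms by (intro the_equality) (auto split: if_splits)
  have "x \<noteq> x(i := s) \<and> (\<exists>i'<n. x(i := s) = x(i' := (x(i := s)) i'))"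
    using assms by (auto simp: fun_eq_iff)
  then show ?thesis unfolding sir_rate_def th by simp
qed

definition Tset :: "nat \<Rightarrow> nat \<Rightarrow> (nat \<Rightarrow> lstate) \<Rightarrow> (nat \<times> lstate) set" where
  "Tset n p x = Sigma {..<n} (\<lambda>i. LS p - {x i})"

lemma rate_zero:
  assumes y: "y \<in> sir_states n p" "y \<noteq> x" "y \<notin> (\<lambda>(i,s). x(i := s)) ` Tset n p x"
  shows "sir_rate n p A beta delta Pm x y = 0"
proof -
  have "\<not> (\<exists>i<n. y = x(i := y i))"
  proof
    assume "\<exists>i<n. y = x(i := y i)"
    then obtain i where i: "i < n" "y = x(i := y i)" by blast
    have "y i \<noteq> x i" using i y(2) by (metis fun_upd_triv)
    then have "(i, y i) \<in> Tset n p x" using state_LS[OF y(1) i(1)] i unfolding Tset_def by auto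
    then show False using y(3) i by force
  qed
  then show ?thesis unfolding sir_rate_def by auto
qed

lemma inj_upd: "inj_on (\<lambda>(i,s). x(i := s)) (Tset n p x)"
proof (rule inj_onI, clarify)
  fix i s i' s' assume a: "(i, s) \<in> Tset n p x" "(i', s') \<in> Tset n p x" "x(i := s) = x(i' := s')"
  have si: "s \<noteq> x i" using a(1) unfolding Tset_def by auto
  have "i = i'"
  proof (rule ccontr)
    assume "i \<noteq> i'"
    then have "(x(i := s)) i = x i" using a(3) by (metis fun_upd_other fun_upd_same)
    then show False using si by simp
  qed
  moreover then have "s = s'" using a(3) by (metis fun_upd_same)
  ultimately show "i = i' \<and> s = s'" by simp
qed

lemma gen_sum:
  assumes x: "x \<in> sir_states n p"
  shows "(\<Sum>y\<in>sir_states n p. sir_gen n p A beta delta Pm x y * f y)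
       = (\<Sum>i<n. \<Sum>s\<in>LS p - {x i}. node_rate n p A beta delta Pm x i s * (f (x(i := s)) - f x))"
proof -
  let ?S = "sir_states n p"
  let ?r = "sir_rate n p A beta delta Pm x"
  let ?g = "\<lambda>(i,s). x(i := s)"
  have fin: "finite ?S" by (rule finite_states)
  have "(\<Sum>y\<in>?S. sir_gen n p A beta delta Pm x y * f y)
      = sir_gen n p A beta delta Pm x x * f x + (\<Sum>y\<in>?S - {x}. sir_gen n p A beta delta Pm x y * f y)"
    using fin x by (simp add: sum.remove)
  also have "(\<Sum>y\<in>?S - {x}. sir_gen n p A beta delta Pm x y * f y) = (\<Sum>y\<in>?S - {x}. ?r y * f y)"
    unfolding sir_gen_def by (rule sum.cong) auto
  also have "sir_gen n p A beta delta Pm x x * f x = - (\<Sum>y\<in>?S - {x}. ?r y * f x)"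
    unfolding sir_gen_def by (simp add: sum_distrib_right)
  finally have "(\<Sum>y\<in>?S. sir_gen n p A beta delta Pm x y * f y) = (\<Sum>y\<in>?S - {x}. ?r y * (f y - f x))"
    by (simp add: sum_subtractf right_diff_distrib)
  also have "\<dots> = (\<Sum>y\<in>?g ` Tset n p x. ?r y * (f y - f x))"
  proof (rule sum.mono_neutral_right)
    show "finite (?S - {x})" using fin by simp
    show "?g ` Tset n p x \<subseteq> ?S - {x}"
    proof
      fix y assume "y \<in> ?g ` Tset n p x"
      then obtain i s where iss: "(i, s) \<in> Tset n p x" and y: "y = x(i := s)" by auto
      then have i: "i < n" "s \<in> LS p" "s \<noteq> x i" unfolding Tset_def by auto
      have "x(i := s) \<noteq> x" using i(3) by (metis fun_upd_same)
      then show "y \<in> ?S - {x}" using states_upd[OF x i(1,2)] y by simp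
    qed
    show "\<forall>y\<in>?S - {x} - ?g ` Tset n p x. ?r y * (f y - f x) = 0"
      using rate_zero by auto
  qed
  also have "\<dots> = (\<Sum>(i,s)\<in>Tset n p x. ?r (x(i := s)) * (f (x(i := s)) - f x))"
    by (subst sum.reindex[OF inj_upd]) (simp add: case_prod_beta)
  also have "\<dots> = (\<Sum>(i,s)\<in>Tset n p x. node_rate n p A beta delta Pm x i s * (f (x(i := s)) - f x))"
  proof (rule sum.cong)
    fix z assume "z \<in> Tset n p x"
    then obtain i s where z: "z = (i, s)" "i < n" "s \<noteq> x i" unfolding Tset_def by auto
    show "(case z of (i,s) \<Rightarrow> ?r (x(i := s)) * (f (x(i := s)) - f x))
        = (case z of (i,s) \<Rightarrow> node_rate n p A beta delta Pm x i s * (f (x(i := s)) - f x))"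
      using rate_upd[of i n s x p A beta delta Pm, OF z(2,3)] z(1) by simp
  qed simp
  also have "\<dots> = (\<Sum>i<n. \<Sum>s\<in>LS p - {x i}. node_rate n p A beta delta Pm x i s * (f (x(i := s)) - f x))"
    unfolding Tset_def by (subst sum.Sigma) (auto simp: finite_LS)
  finally show ?thesis .
qed

lemma sum_upd:
  fixes \<phi> :: "nat \<Rightarrow> lstate \<Rightarrow> real"
  assumes "i < n"
  shows "(\<Sum>k<n. \<phi> k ((x(i := s)) k)) - (\<Sum>k<n. \<phi> k (x k)) = \<phi> i s - \<phi> i (x i)"
proof -
  have "(\<Sum>k<n. \<phi> k ((x(i := s)) k)) = (\<Sum>k<n. \<phi> k (x k) + (if k = i then \<phi> i s - \<phi> i (x i) else 0))"
    by (rule sum.cong) auto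
  also have "\<dots> = (\<Sum>k<n. \<phi> k (x k)) + (\<phi> i s - \<phi> i (x i))"
    using assms by (simp add: sum.distrib)
  finally show ?thesis by simp
qed

lemma gen_sum_phi:
  fixes \<phi> :: "nat \<Rightarrow> lstate \<Rightarrow> real"
  assumes x: "x \<in> sir_states n p"
  shows "(\<Sum>y\<in>sir_states n p. sir_gen n p A beta delta Pm x y * (\<Sum>k<n. \<phi> k (y k)))
       = (\<Sum>i<n. \<Sum>s\<in>LS p - {x i}. node_rate n p A beta delta Pm x i s * (\<phi> i s - \<phi> i (x i)))"
  unfolding gen_sum[OF x] by (intro sum.cong refl) (auto simp del: fun_upd_apply simp add: sum_upd)


locale sirp =
  fixes n p :: nat and A :: mat and beta delta :: "nat \<Rightarrow> real" and Pm :: "nat \<Rightarrow> mat"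
    and I0 :: "nat set" and v :: "nat \<Rightarrow> real"
  assumes p_pos: "0 < p"
    and A_nn: "\<forall>i<n. \<forall>j<n. A i j \<ge> 0"
    and beta_nn: "\<forall>i<n. beta i \<ge> 0"
    and delta_nn: "\<forall>i<n. delta i \<ge> 0"
    and off_nn: "\<forall>i<n. \<forall>l<p. \<forall>m<p. l \<noteq> m \<longrightarrow> Pm i l m \<ge> 0"
    and w_nn: "\<forall>i<n. \<forall>l<p. exitvec p (Pm i) l \<ge> 0"
    and I0_sub: "I0 \<subseteq> {..<n}"
    and v_pos: "\<forall>c<n*p. v c > 0"
    and key: "\<forall>j<n. \<forall>l<p. (\<Sum>m<p. v (j*p+m) * (if l = m then 0 else Pm j l m))
        + (\<Sum>i<n. v (i*p) * ((if i \<in> I0 then 0 else 1) * beta i * A i j))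
        + exitvec p (Pm j) l + delta j < v (j*p+l) * (- Pm j l l + delta j)"
begin

abbreviation "S \<equiv> sir_states n p"
abbreviation "Q \<equiv> sir_gen n p A beta delta Pm"
abbreviation "rt \<equiv> sir_rate n p A beta delta Pm"
abbreviation "nr \<equiv> node_rate n p A beta delta Pm"

lemma is_inf_nn: "0 \<le> is_inf s" unfolding is_inf_def by (cases s) auto

lemma nr_nn:
  assumes x: "x \<in> S" and i: "i < n" and s: "s \<in> LS p"
  shows "nr x i s \<ge> 0"
proof (cases "x i")
  case Sus
  have "0 \<le> (\<Sum>j<n. A i j * is_inf (x j))" using A_nn i by (intro sum_nonneg mult_nonneg_nonneg is_inf_nn) auto
  then show ?thesis using Sus beta_nn i unfolding node_rate_def by (cases s) auto
next
  case (Inf l)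
  have l: "l < p" using x Inf i unfolding sir_states_def by auto
  show ?thesis
  proof (cases s)
    case (Inf m)
    then have "m < p" using s unfolding LS_def by auto
    then show ?thesis using \<open>x i = Inf l\<close> Inf off_nn i l unfolding node_rate_def by auto
  next
    case Rem then show ?thesis using \<open>x i = Inf l\<close> w_nn delta_nn i l unfolding node_rate_def by auto
  qed (use \<open>x i = Inf l\<close> in \<open>auto simp: node_rate_def\<close>)
next
  case Rem then show ?thesis unfolding node_rate_def by auto
qed

lemma rt_nn:
  assumes x: "x \<in> S" and y: "y \<in> S" "y \<noteq> x"
  shows "rt x y \<ge> 0"
proof (cases "y \<in> (\<lambda>(i,s). x(i := s)) ` Tset n p x")
  case True
  then obtain i s where "i < n" "s \<in> LS p" "s \<noteq> x i" "y = x(i := s)" unfolding Tset_def by auto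
  then show ?thesis using rate_upd[of i n s x p A beta delta Pm] nr_nn[OF x] by simp
next
  case False
  then show ?thesis using rate_zero[OF y(1) y(2) False] by simp
qed

definition cc :: real where "cc = 1 + (\<Sum>x\<in>S. \<Sum>z\<in>S - {x}. rt x z)"

lemma rowsum_le: "x \<in> S \<Longrightarrow> (\<Sum>z\<in>S - {x}. rt x z) \<le> cc - 1"
  unfolding cc_def using finite_states
  by (simp, intro member_le_sum[where f="\<lambda>x. \<Sum>z\<in>S - {x}. rt x z"] sum_nonneg) (auto intro: rt_nn)

lemma cc_pos: "cc > 0"
proof -
  have "0 \<le> (\<Sum>x\<in>S. \<Sum>z\<in>S - {x}. rt x z)" by (intro sum_nonneg) (auto intro: rt_nn)
  then show ?thesis unfolding cc_def by simp
qed

abbreviation "K \<equiv> Km Q cc"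

lemma K_nn: "\<forall>z\<in>S. \<forall>w\<in>S. K z w \<ge> 0"
proof (intro ballI)
  fix z w assume z: "z \<in> S" and w: "w \<in> S"
  show "K z w \<ge> 0"
  proof (cases "z = w")
    case True
    then show ?thesis using rowsum_le[OF z] unfolding Km_def sir_gen_def by simp
  next
    case False
    then show ?thesis using rt_nn[OF z w] unfolding Km_def sir_gen_def by simp
  qed
qed

definition Rc :: "(nat \<Rightarrow> lstate) set" where "Rc = {x\<in>S. \<forall>i\<in>I0. x i \<noteq> Sus}"

lemma closed: "\<forall>z\<in>Rc. \<forall>w\<in>S - Rc. K z w = 0"
proof (intro ballI)
  fix z w assume z: "z \<in> Rc" and w: "w \<in> S - Rc"
  have zw: "z \<noteq> w" using z w by auto
  have zS: "z \<in> S" using z unfolding Rc_def by auto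
  have "rt z w = 0"
  proof (cases "w \<in> (\<lambda>(i,s). z(i := s)) ` Tset n p z")
    case True
    then obtain i s where is': "i < n" "s \<noteq> z i" "w = z(i := s)" unfolding Tset_def by auto
    obtain i' where i': "i' \<in> I0" "w i' = Sus" using w unfolding Rc_def by auto
    have "i' = i" using i' z is'(3) unfolding Rc_def by (auto split: if_splits)
    then have "s = Sus" using i' is'(3) by simp
    then have "nr z i s = 0" using is'(2) unfolding node_rate_def by (cases "z i") auto
    then show ?thesis using rate_upd[of i n s z p A beta delta Pm] is' by simp
  next
    case False
    then show ?thesis using rate_zero[of w n p z A beta delta Pm] w zw by auto
  qed
  then show "K z w = 0" using zw unfolding Km_def sir_gen_def by simp
qed

lemma Rc_S: "Rc \<subseteq> S" unfolding Rc_def by auto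

lemma x0_Rc: "sir_init n I0 \<in> Rc"
  using I0_sub p_pos unfolding Rc_def sir_states_def sir_init_def by auto

lemma K_sum:
  assumes x: "x \<in> S"
  shows "(\<Sum>y\<in>S. K x y * f y) = cc * f x + (\<Sum>y\<in>S. Q x y * f y)"
proof -
  have "(\<Sum>y\<in>S. K x y * f y) = (\<Sum>y\<in>S. Q x y * f y + (if x = y then cc * f y else 0))"
    unfolding Km_def by (rule sum.cong) (auto simp: algebra_simps)
  also have "\<dots> = (\<Sum>y\<in>S. Q x y * f y) + (\<Sum>y\<in>S. if x = y then cc * f y else 0)"
    by (rule sum.distrib)
  also have "(\<Sum>y\<in>S. if x = y then cc * f y else 0) = cc * f x" using x finite_states by simp
  finally show ?thesis by simp
qed

end


context sirp
begin

definition psi :: "lstate \<Rightarrow> real" where "psi s = (if s = Rem then 1 else 0)"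
definition phiV :: "nat \<Rightarrow> lstate \<Rightarrow> real" where
  "phiV i s = psi s + (case s of Inf l \<Rightarrow> v (i*p+l) | _ \<Rightarrow> 0)"
definition Vf :: "(nat \<Rightarrow> lstate) \<Rightarrow> real" where "Vf y = (\<Sum>i<n. phiV i (y i))"

lemma idx_lt: "i < n \<Longrightarrow> l < p \<Longrightarrow> i*p+l < n*(p::nat)"
proof -
  assume i: "i < n" and l: "l < p"
  have "i*p + l < (i+1)*p" using l by simp
  also have "(i+1)*p \<le> n*p" using i by (intro mult_right_mono) auto
  finally show ?thesis .
qed

lemma Rm_sum: "real (card {i. i < n \<and> y i = Rem}) = (\<Sum>i<n. psi (y i))"
proof -
  have "{i. i < n \<and> y i = Rem} = {i\<in>{..<n}. y i = Rem}" by auto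
  then have "real (card {i. i < n \<and> y i = Rem}) = (\<Sum>i\<in>{i\<in>{..<n}. y i = Rem}. 1)" by simp
  also have "\<dots> = (\<Sum>i<n. if y i = Rem then 1 else 0)" by (rule sum.inter_filter) simp
  finally show ?thesis unfolding psi_def .
qed

lemma harmonicR:
  assumes z: "z \<in> Rc"
  shows "cc * real (card {i. i < n \<and> z i = Rem}) \<le> (\<Sum>y\<in>S. K z y * real (card {i. i < n \<and> y i = Rem}))"
proof -
  have zS: "z \<in> S" using z Rc_S by auto
  have "(\<Sum>y\<in>S. K z y * real (card {i. i < n \<and> y i = Rem}))
     = cc * real (card {i. i < n \<and> z i = Rem}) + (\<Sum>y\<in>S. Q z y * (\<Sum>k<n. psi (y k)))"
    unfolding K_sum[OF zS] Rm_sum ..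
  also have "(\<Sum>y\<in>S. Q z y * (\<Sum>k<n. psi (y k))) = (\<Sum>i<n. \<Sum>s\<in>LS p - {z i}. nr z i s * (psi s - psi (z i)))"
    by (rule gen_sum_phi[OF zS])
  also have "\<dots> \<ge> 0"
  proof (intro sum_nonneg)
    fix i s assume i: "i \<in> {..<n}" and s: "s \<in> LS p - {z i}"
    show "0 \<le> nr z i s * (psi s - psi (z i))"
    proof (cases "z i = Rem")
      case True then show ?thesis unfolding node_rate_def by simp
    next
      case False then show ?thesis using nr_nn[OF zS, of i s] i s by (simp add: psi_def)
    qed
  qed
  ultimately show ?thesis by linarith
qed

lemma R_le_V:
  assumes z: "z \<in> Rc"
  shows "real (card {i. i < n \<and> z i = Rem}) \<le> Vf z"
  unfolding Rm_sum Vf_def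
proof (rule sum_mono)
  fix i assume i: "i \<in> {..<n}"
  have zS: "z \<in> S" using z Rc_S by auto
  show "psi (z i) \<le> phiV i (z i)"
  proof (cases "z i")
    case (Inf l)
    then have "l < p" using zS i unfolding sir_states_def by auto
    then have "i*p+l < n*p" using i idx_lt by auto
    then show ?thesis using Inf v_pos unfolding phiV_def by (auto intro: less_imp_le)
  qed (auto simp: phiV_def)
qed

lemma inj_Inf: "inj_on Inf X" by (rule inj_onI) simp

lemma ns_sus:
  assumes i: "i < n" and zi: "z i = Sus"
  shows "(\<Sum>s\<in>LS p - {z i}. nr z i s * (phiV i s - phiV i (z i))) = beta i * (\<Sum>j<n. A i j * is_inf (z j)) * v (i*p)"
proof -
  have e: "LS p - {z i} = insert Rem (Inf ` {..<p})" using zi unfolding LS_def by auto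
  have "(\<Sum>s\<in>LS p - {z i}. nr z i s * (phiV i s - phiV i (z i)))
      = nr z i Rem * (phiV i Rem - phiV i (z i)) + (\<Sum>s\<in>Inf ` {..<p}. nr z i s * (phiV i s - phiV i (z i)))"
    unfolding e by (subst sum.insert) auto
  also have "nr z i Rem = 0" using zi unfolding node_rate_def by simp
  also have "(\<Sum>s\<in>Inf ` {..<p}. nr z i s * (phiV i s - phiV i (z i))) = (\<Sum>m<p. nr z i (Inf m) * (phiV i (Inf m) - phiV i (z i)))"
    by (subst sum.reindex[OF inj_Inf]) simp
  also have "\<dots> = (\<Sum>m<p. if m = 0 then beta i * (\<Sum>j<n. A i j * is_inf (z j)) * v (i*p) else 0)"
    by (rule sum.cong) (auto simp: node_rate_def zi phiV_def psi_def)
  also have "\<dots> = beta i * (\<Sum>j<n. A i j * is_inf (z j)) * v (i*p)" using p_pos by simp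
  finally show ?thesis by simp
qed

lemma ns_inf:
  assumes i: "i < n" and zi: "z i = Inf l" and l: "l < p"
  shows "(\<Sum>s\<in>LS p - {z i}. nr z i s * (phiV i s - phiV i (z i)))
     = (\<Sum>m<p. if l = m then 0 else Pm i l m * (v (i*p+m) - v (i*p+l))) + (exitvec p (Pm i) l + delta i) * (1 - v (i*p+l))"
proof -
  have e: "LS p - {z i} = insert Sus (insert Rem (Inf ` ({..<p} - {l})))" using zi l unfolding LS_def by auto
  have "(\<Sum>s\<in>LS p - {z i}. nr z i s * (phiV i s - phiV i (z i)))
      = nr z i Sus * (phiV i Sus - phiV i (z i)) + (nr z i Rem * (phiV i Rem - phiV i (z i))
         + (\<Sum>s\<in>Inf ` ({..<p} - {l}). nr z i s * (phiV i s - phiV i (z i))))"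
  proof -
    have n1: "Sus \<notin> insert Rem (Inf ` ({..<p} - {l}))" by auto
    have n2: "Rem \<notin> Inf ` ({..<p} - {l})" by auto
    show ?thesis unfolding e
      by (subst sum.insert[OF _ n1], simp) (subst sum.insert[OF _ n2], simp_all)
  qed
  also have "nr z i Sus = 0" using zi unfolding node_rate_def by simp
  also have "nr z i Rem * (phiV i Rem - phiV i (z i)) = (exitvec p (Pm i) l + delta i) * (1 - v (i*p+l))"
    using zi unfolding node_rate_def phiV_def psi_def by simp
  also have "(\<Sum>s\<in>Inf ` ({..<p} - {l}). nr z i s * (phiV i s - phiV i (z i)))
      = (\<Sum>m\<in>{..<p} - {l}. nr z i (Inf m) * (phiV i (Inf m) - phiV i (z i)))"
    by (subst sum.reindex[OF inj_Inf]) simp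
  also have "\<dots> = (\<Sum>m\<in>{..<p} - {l}. if l = m then 0 else Pm i l m * (v (i*p+m) - v (i*p+l)))"
    by (rule sum.cong) (auto simp: node_rate_def zi phiV_def psi_def)
  also have "\<dots> = (\<Sum>m<p. if l = m then 0 else Pm i l m * (v (i*p+m) - v (i*p+l)))"
    by (rule sum.mono_neutral_left) auto
  finally show ?thesis by simp
qed

lemma ns_rem:
  assumes zi: "z i = Rem"
  shows "(\<Sum>s\<in>LS p - {z i}. nr z i s * (phiV i s - phiV i (z i))) = 0"
  using zi unfolding node_rate_def by simp

end


context sirp
begin

definition Jc :: "nat \<Rightarrow> real" where "Jc i = (if i \<in> I0 then 0 else 1)"
definition G :: "nat \<Rightarrow> real" where "G j = (\<Sum>i<n. v (i*p) * (Jc i * beta i * A i j))"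
definition Wl :: "nat \<Rightarrow> nat \<Rightarrow> real" where
  "Wl i l = (\<Sum>m<p. if l = m then 0 else Pm i l m * (v (i*p+m) - v (i*p+l))) + (exitvec p (Pm i) l + delta i) * (1 - v (i*p+l))"

lemma key_neg:
  assumes j: "j < n" and l: "l < p"
  shows "G j + Wl j l < 0"
proof -
  define a where "a = v (j*p+l)"
  define S1 where "S1 = (\<Sum>m<p. v (j*p+m) * (if l = m then 0 else Pm j l m))"
  define sP where "sP = (\<Sum>m<p. Pm j l m)"
  define so where "so = (\<Sum>m<p. if l = m then 0 else Pm j l m)"
  have e1: "(\<Sum>m<p. if l = m then 0 else Pm j l m * (v (j*p+m) - a)) = S1 - a * so"
  proof -
    have "(\<Sum>m<p. if l = m then 0 else Pm j l m * (v (j*p+m) - a))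
        = (\<Sum>m<p. v (j*p+m) * (if l = m then 0 else Pm j l m) - a * (if l = m then 0 else Pm j l m))"
      by (rule sum.cong) (auto simp: a_def algebra_simps)
    also have "\<dots> = S1 - (\<Sum>m<p. a * (if l = m then 0 else Pm j l m))"
      unfolding S1_def by (rule sum_subtractf)
    also have "(\<Sum>m<p. a * (if l = m then 0 else Pm j l m)) = a * so"
      unfolding so_def by (rule sum_distrib_left[symmetric])
    finally show ?thesis .
  qed
  have e2: "sP = Pm j l l + so"
  proof -
    have "sP = (\<Sum>m<p. (if l = m then Pm j l m else 0) + (if l = m then 0 else Pm j l m))"
      unfolding sP_def by (rule sum.cong) auto
    also have "\<dots> = (\<Sum>m<p. if l = m then Pm j l m else 0) + so" unfolding so_def by (rule sum.distrib)
    also have "(\<Sum>m<p. if l = m then Pm j l m else 0) = Pm j l l" using l by simp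
    finally show ?thesis .
  qed
  have w: "exitvec p (Pm j) l = - sP" unfolding exitvec_def sP_def by simp
  have k: "S1 + G j + exitvec p (Pm j) l + delta j < a * (- Pm j l l + delta j)"
    using key j l unfolding S1_def G_def Jc_def a_def by auto
  have "G j + Wl j l = (S1 + G j + exitvec p (Pm j) l + delta j) - a * (- Pm j l l + delta j)"
    unfolding Wl_def a_def[symmetric] unfolding e1 w using e2 by (simp add: algebra_simps)
  then show ?thesis using k by linarith
qed

lemma ns_split:
  assumes z: "z \<in> S" and i: "i < n"
  shows "(\<Sum>s\<in>LS p - {z i}. nr z i s * (phiV i s - phiV i (z i)))
     = (if z i = Sus then beta i * (\<Sum>j<n. A i j * is_inf (z j)) * v (i*p) else 0)
       + (case z i of Inf l \<Rightarrow> Wl i l | _ \<Rightarrow> 0)"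
proof (cases "z i")
  case Sus then show ?thesis using ns_sus[OF i] by simp
next
  case (Inf l)
  then have "l < p" using z i unfolding sir_states_def by auto
  then show ?thesis using ns_inf[where z=z and l=l, OF i Inf \<open>l < p\<close>] Inf unfolding Wl_def by simp
next
  case Rem then show ?thesis using ns_rem Rem by simp
qed

lemma harmonicV:
  assumes z: "z \<in> Rc"
  shows "(\<Sum>y\<in>S. K z y * Vf y) \<le> cc * Vf z"
proof -
  have zS: "z \<in> S" using z Rc_S by auto
  define X where "X i = (\<Sum>j<n. A i j * is_inf (z j))" for i
  have X_nn: "i < n \<Longrightarrow> 0 \<le> X i" for i unfolding X_def using A_nn by (intro sum_nonneg mult_nonneg_nonneg is_inf_nn) auto
  have "(\<Sum>y\<in>S. K z y * Vf y) = cc * Vf z + (\<Sum>y\<in>S. Q z y * (\<Sum>k<n. phiV k (y k)))"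
    unfolding K_sum[OF zS] Vf_def ..
  also have "(\<Sum>y\<in>S. Q z y * (\<Sum>k<n. phiV k (y k))) = (\<Sum>i<n. \<Sum>s\<in>LS p - {z i}. nr z i s * (phiV i s - phiV i (z i)))"
    by (rule gen_sum_phi[OF zS])
  also have "\<dots> = (\<Sum>i<n. (if z i = Sus then beta i * X i * v (i*p) else 0))
       + (\<Sum>i<n. (case z i of Inf l \<Rightarrow> Wl i l | _ \<Rightarrow> 0))"
    unfolding sum.distrib[symmetric] X_def by (rule sum.cong) (auto simp: ns_split[OF zS])
  also have "(\<Sum>i<n. (if z i = Sus then beta i * X i * v (i*p) else 0)) \<le> (\<Sum>i<n. Jc i * beta i * X i * v (i*p))"
  proof (rule sum_mono)
    fix i assume i: "i \<in> {..<n}"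
    have vp: "0 < v (i*p)" using v_pos idx_lt[of i 0] i p_pos by auto
    have nn: "0 \<le> beta i * X i * v (i*p)" using beta_nn X_nn i vp by auto
    show "(if z i = Sus then beta i * X i * v (i*p) else 0) \<le> Jc i * beta i * X i * v (i*p)"
    proof (cases "z i = Sus")
      case True
      then have "i \<notin> I0" using z unfolding Rc_def by auto
      then show ?thesis using True by (simp add: Jc_def)
    next
      case False then show ?thesis using nn by (simp add: Jc_def)
    qed
  qed
  also have "(\<Sum>i<n. Jc i * beta i * X i * v (i*p)) = (\<Sum>j<n. is_inf (z j) * G j)"
  proof -
    have "(\<Sum>i<n. Jc i * beta i * X i * v (i*p)) = (\<Sum>i<n. \<Sum>j<n. is_inf (z j) * (v (i*p) * (Jc i * beta i * A i j)))"
      unfolding X_def by (rule sum.cong) (auto simp: sum_distrib_left sum_distrib_right mult_ac)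
    also have "\<dots> = (\<Sum>j<n. \<Sum>i<n. is_inf (z j) * (v (i*p) * (Jc i * beta i * A i j)))" by (rule sum.swap)
    also have "\<dots> = (\<Sum>j<n. is_inf (z j) * G j)" unfolding G_def by (simp add: sum_distrib_left)
    finally show ?thesis .
  qed
  finally have "(\<Sum>y\<in>S. K z y * Vf y) \<le> cc * Vf z + ((\<Sum>j<n. is_inf (z j) * G j) + (\<Sum>i<n. (case z i of Inf l \<Rightarrow> Wl i l | _ \<Rightarrow> 0)))"
    by linarith
  also have "(\<Sum>j<n. is_inf (z j) * G j) + (\<Sum>i<n. (case z i of Inf l \<Rightarrow> Wl i l | _ \<Rightarrow> 0))
      = (\<Sum>j<n. is_inf (z j) * G j + (case z j of Inf l \<Rightarrow> Wl j l | _ \<Rightarrow> 0))"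
    by (rule sum.distrib[symmetric])
  also have "\<dots> \<le> 0"
  proof (rule sum_nonpos)
    fix j assume j: "j \<in> {..<n}"
    show "is_inf (z j) * G j + (case z j of Inf l \<Rightarrow> Wl j l | _ \<Rightarrow> 0) \<le> 0"
    proof (cases "z j")
      case (Inf l)
      then have "l < p" using zS j unfolding sir_states_def by auto
      then show ?thesis using key_neg[of j l] j Inf by (simp add: is_inf_def)
    qed (auto simp: is_inf_def)
  qed
  finally show ?thesis by simp
qed

lemma Vf_x0: "Vf (sir_init n I0) = (\<Sum>i<n. if i \<in> I0 then v (i*p) else 0)"
  unfolding Vf_def phiV_def psi_def sir_init_def by (rule sum.cong) auto

lemma main_limit:
  "\<exists>L. ((\<lambda>t. sir_ERem n p A beta delta Pm I0 t) \<longlongrightarrow> L) at_top \<and> L \<le> Vf (sir_init n I0)"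
proof -
  let ?x0 = "sir_init n I0"
  let ?Rm = "\<lambda>y. real (card {i. i < n \<and> y i = Rem})"
  interpret R: reachc S Rc K ?x0
    by unfold_locales (use finite_states Rc_S closed x0_Rc K_nn in auto)
  have fun_eq: "(\<lambda>t. sir_ERem n p A beta delta Pm I0 t) = (\<lambda>t. exp (-cc*t) * (\<Sum>j. t^j/fact j * R.Ef j ?Rm))"
    unfolding sir_ERem_def R.Ef_def by (rule ext) (rule ctmc_expect[OF finite_states])
  have x0S: "?x0 \<in> Rc" by (rule x0_Rc)
  have "\<exists>L. ((\<lambda>t. exp(-cc*t) * (\<Sum>j. t^j/fact j * R.Ef j ?Rm)) \<longlongrightarrow> L) at_top \<and> L \<le> Vf ?x0"
  proof (rule poisson_limit)
    show "cc > 0" by (rule cc_pos)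
    show "0 \<le> R.Ef 0 ?Rm" unfolding R.Ef_0 by simp
    show "\<forall>j. cc * R.Ef j ?Rm \<le> R.Ef (Suc j) ?Rm"
    proof
      fix j show "cc * R.Ef j ?Rm \<le> R.Ef (Suc j) ?Rm" by (rule R.Ef_sub) (use harmonicR in auto)
    qed
    show "\<forall>j. R.Ef j ?Rm \<le> cc^j * Vf ?x0"
    proof
      fix j
      have "R.Ef j ?Rm \<le> R.Ef j Vf" by (rule R.Ef_mono) (use R_le_V in auto)
      also have "\<dots> \<le> cc^j * Vf ?x0" by (rule R.Ef_super_pow) (use harmonicV cc_pos in auto)
      finally show "R.Ef j ?Rm \<le> cc^j * Vf ?x0" .
    qed
  qed
  then show ?thesis unfolding fun_eq .
qed

end


lemma divp: "m < p \<Longrightarrow> (i*p+m) div p = (i::nat)"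
  by simp
lemma modp: "m < p \<Longrightarrow> (i*p+m) mod p = (m::nat)"
  by simp

lemma idx_lt': "i < n \<Longrightarrow> l < p \<Longrightarrow> i*p+l < n*(p::nat)"
proof -
  assume i: "i < n" and l: "l < p"
  have "i*p + l < (i+1)*p" using l by simp
  also have "(i+1)*p \<le> n*p" using i by (intro mult_right_mono) auto
  finally show ?thesis .
qed

lemma sum_np:
  assumes p: "0 < (p::nat)"
  shows "(\<Sum>r<n*p. f r) = (\<Sum>i<n. \<Sum>m<p. f (i*p+m))"
proof -
  have "(\<Sum>r<n*p. f r) = (\<Sum>(i,m)\<in>{..<n} \<times> {..<p}. f (i*p+m))"
  proof (rule sum.reindex_bij_witness[where i="\<lambda>(i,m). i*p+m" and j="\<lambda>r. (r div p, r mod p)"])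
    fix r assume r: "r \<in> {..<n*p}"
    show "(case (r div p, r mod p) of (i, m) \<Rightarrow> i*p+m) = r" by simp
    show "(r div p, r mod p) \<in> {..<n} \<times> {..<p}" using r p
      by (auto simp: less_mult_imp_div_less)
    show "(case (r div p, r mod p) of (i, m) \<Rightarrow> f (i*p+m)) = f r" by simp
  next
    fix a assume a: "a \<in> {..<n} \<times> {..<p}"
    then obtain i m where im: "a = (i,m)" "i < n" "m < p" by auto
    show "((case a of (i, m) \<Rightarrow> i*p+m) div p, (case a of (i, m) \<Rightarrow> i*p+m) mod p) = a"
      using im by simp
    show "(case a of (i, m) \<Rightarrow> i*p+m) \<in> {..<n*p}" using im idx_lt' by auto
  qed
  also have "\<dots> = (\<Sum>i<n. \<Sum>m<p. f (i*p+m))" by (rule sum.cartesian_product[symmetric])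
  finally show ?thesis .
qed

lemma vmul_madd: "vmul k v (madd X Y) c = vmul k v X c + vmul k v Y c"
  unfolding vmul_def madd_def by (simp add: distrib_left sum.distrib)

lemma vmul_dsum:
  assumes p: "0 < p" and j: "j < n" and l: "l < p"
  shows "vmul (n*p) v (dsum p p F) (j*p+l) = (\<Sum>m<p. v (j*p+m) * F j m l)"
proof -
  have "vmul (n*p) v (dsum p p F) (j*p+l) = (\<Sum>i<n. \<Sum>m<p. v (i*p+m) * dsum p p F (i*p+m) (j*p+l))"
    unfolding vmul_def by (rule sum_np[OF p])
  also have "\<dots> = (\<Sum>i<n. if i = j then (\<Sum>m<p. v (j*p+m) * F j m l) else 0)"
    by (rule sum.cong) (use l in \<open>auto simp: dsum_def intro!: sum.cong\<close>)
  also have "\<dots> = (\<Sum>m<p. v (j*p+m) * F j m l)" using j by simp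
  finally show ?thesis .
qed

lemma vmul_kron:
  assumes p: "0 < p" and j: "j < n" and l: "l < p"
  shows "vmul (n*p) v (kron p p M (outer u1 ones)) (j*p+l) = (\<Sum>i<n. v (i*p) * M i j)"
proof -
  have "vmul (n*p) v (kron p p M (outer u1 ones)) (j*p+l) = (\<Sum>i<n. \<Sum>m<p. v (i*p+m) * kron p p M (outer u1 ones) (i*p+m) (j*p+l))"
    unfolding vmul_def by (rule sum_np[OF p])
  also have "\<dots> = (\<Sum>i<n. \<Sum>m<p. if m = 0 then v (i*p) * M i j else 0)"
    by (intro sum.cong refl) (use l in \<open>auto simp: kron_def outer_def u1_def ones_def\<close>)
  also have "\<dots> = (\<Sum>i<n. v (i*p) * M i j)" using p by simp
  finally show ?thesis .
qed

lemma mmul_diag: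
  assumes i: "i < n"
  shows "mmul n (mmul n (diagm J) (diagm b)) A i j = J i * b i * A i j"
proof -
  have "mmul n (diagm J) (diagm b) i k = (if i = k then J i * b i else 0)" for k
  proof -
    have "mmul n (diagm J) (diagm b) i k = (\<Sum>l<n. if l = i then (if i = k then J i * b i else 0) else 0)"
      unfolding mmul_def diagm_def by (rule sum.cong) auto
    then show ?thesis using i by simp
  qed
  then have "mmul n (mmul n (diagm J) (diagm b)) A i j = (\<Sum>k<n. if k = i then J i * b i * A i j else 0)"
    unfolding mmul_def by (intro sum.cong) auto
  then show ?thesis using i by simp
qed

lemma vmul_dsum1:
  assumes j: "j < n" and l: "l < p"
  shows "vmul n ones (dsum 1 p (\<lambda>i _ m. w i m)) (j*p+l) = w j l"
proof -
  have "vmul n ones (dsum 1 p (\<lambda>i _ m. w i m)) (j*p+l) = (\<Sum>i<n. if i = j then w j l else 0)"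
    unfolding vmul_def ones_def dsum_def by (rule sum.cong) (use l in auto)
  then show ?thesis using j by simp
qed

lemma vmul_kron1:
  assumes j: "j < n" and l: "l < p"
  shows "vmul n ones (kron 1 p (diagm d) (\<lambda>_ _. 1)) (j*p+l) = d j"
proof -
  have "vmul n ones (kron 1 p (diagm d) (\<lambda>_ _. 1)) (j*p+l) = (\<Sum>i<n. if i = j then d j else 0)"
    unfolding vmul_def ones_def kron_def diagm_def by (rule sum.cong) (use l in auto)
  then show ?thesis using j by simp
qed

lemma dsum11: "l < p \<Longrightarrow> (\<Sum>m<p. v m * dsum 1 1 (\<lambda>l _ _. g l) m l) = v l * g l"
  unfolding dsum_def by (simp add: if_distrib cong: if_cong)

lemma posy_nn:
  assumes "posynomial_fun q F" "\<forall>k<q. x k > 0"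
  shows "0 \<le> F x"
proof -
  obtain cs :: "(real \<times> (nat \<Rightarrow> real)) list" where cs: "\<forall>(c,a)\<in>set cs. c > 0"
    "\<forall>x. (\<forall>k<q. x k > 0) \<longrightarrow> F x = (\<Sum>(c,a)\<leftarrow>cs. c * (\<Prod>k<q. x k powr a k))"
    using assms(1) unfolding posynomial_fun_def by blast
  have "0 \<le> (\<Sum>(c,a)\<leftarrow>cs. c * (\<Prod>k<q. x k powr a k))"
    using cs(1) by (intro sum_list_nonneg) (auto intro!: mult_nonneg_nonneg prod_nonneg)
  then show ?thesis using cs(2) assms(2) by simp
qed

theorem theorem2:
  fixes n p :: nat
    and A :: mat
    and delta beta betalo betahi :: "nat \<Rightarrow> real"
    and q :: "nat \<Rightarrow> nat"
    and Pm :: "nat \<Rightarrow> (nat \<Rightarrow> real) \<Rightarrow> mat"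
    and gamma gammalo gammahi :: "nat \<Rightarrow> nat \<Rightarrow> real"
    and I0 :: "nat set"
    and Cbar lambdabar :: real
    and g :: "nat \<Rightarrow> real \<Rightarrow> real"
    and h :: "nat \<Rightarrow> (nat \<Rightarrow> real) \<Rightarrow> real"
    and kappa alpha :: "nat \<Rightarrow> nat \<Rightarrow> real"
    and v :: "nat \<Rightarrow> real"
  assumes p_pos: "0 < p"
    and A_sym: "\<forall>i<n. \<forall>j<n. A i j = A j i"
    and A_01: "\<forall>i<n. \<forall>j<n. A i j = 0 \<or> A i j = 1"
    and A_loop: "\<forall>i<n. A i i = 0"
    and delta_pos: "\<forall>i<n. delta i > 0"
    and I0_sub: "I0 \<subseteq> {..<n}"
    and Cbar_pos: "Cbar > 0"
    and lambdabar_pos: "lambdabar > 0"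
    and beta_int: "\<forall>i<n. 0 < betalo i \<and> betalo i \<le> betahi i"
    and gamma_box: "\<forall>i<n. \<forall>k<q i. 0 < gammalo i k \<and> gammalo i k \<le> gammahi i k"
    and w_posy: "\<forall>i<n. \<forall>l<p. posynomial_fun (q i) (\<lambda>\<gamma>. exitvec p (Pm i \<gamma>) l)"
    and O_posy: "\<forall>i<n. \<forall>l<p. \<forall>m<p. l \<noteq> m \<longrightarrow> posynomial_fun (q i) (\<lambda>\<gamma>. Pm i \<gamma> l m)"
    and D_mono: "\<forall>i<n. \<forall>l<p. monomial_fun (q i) (\<lambda>\<gamma>. - Pm i \<gamma> l l)"
    and g_posy: "\<forall>i<n. posynomial_fun 1 (\<lambda>x. g i (x 0))"
    and h_posy: "\<forall>i<n. posynomial_fun (q i) (h i)"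
    and Pi_inv: "\<forall>i<n. invertible_mat p (Pm i (gamma i))"
    and kappa_pos: "\<forall>i<n. \<forall>l<p. kappa i l > 0"
    and alpha_pos: "\<forall>i<n. \<forall>l<p. alpha i l > 0"
    and kappa_bound: "\<forall>i<n. \<forall>l<p. \<forall>\<gamma>. (\<forall>k<q i. gammalo i k \<le> \<gamma> k \<and> \<gamma> k \<le> gammahi i k) \<longrightarrow>
         kappa i l * (- Pm i \<gamma> l l) powr alpha i l \<le> (- Pm i \<gamma> l l) + delta i"
    and v_pos: "\<forall>c<n*p. v c > 0"
    and main_ineq: "\<forall>c<n*p.
         vmul (n*p) v (madd (dsum p p (\<lambda>i. mT (offdiag (Pm i (gamma i)))))
                            (kron p p (mmul n (mmul n (diagm (\<lambda>i. if i \<in> I0 then 0 else 1)) (diagm beta)) A)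
                                      (outer u1 ones))) c
         + vmul n ones (dsum 1 p (\<lambda>i. \<lambda>_ m. exitvec p (Pm i (gamma i)) m)) c
         + vmul n ones (kron 1 p (diagm delta) (\<lambda>_ _. 1)) c
         < vmul (n*p) v (dsum p p (\<lambda>i. dsum 1 1 (\<lambda>l _ _. kappa i l * (- Pm i (gamma i) l l) powr alpha i l))) c"
    and budget: "(\<Sum>i<n. g i (beta i) + h i (gamma i)) \<le> Cbar"
    and v_init: "(\<Sum>c<n*p. v c * (if c div p \<in> I0 \<and> c mod p = 0 then 1 else 0)) < lambdabar + real (card I0)"
    and beta_bd: "\<forall>i<n. betalo i \<le> beta i \<and> beta i \<le> betahi i"
    and gamma_bd: "\<forall>i<n. \<forall>k<q i. gammalo i k \<le> gamma i k \<and> gamma i k \<le> gammahi i k"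
  shows "(\<forall>i<n. betalo i \<le> beta i \<and> beta i \<le> betahi i)
       \<and> (\<forall>i<n. \<forall>k<q i. gammalo i k \<le> gamma i k \<and> gamma i k \<le> gammahi i k)
       \<and> (\<Sum>i<n. g i (beta i) + h i (gamma i)) \<le> Cbar
       \<and> (\<exists>L. ((\<lambda>t. sir_ERem n p A beta delta (\<lambda>i. Pm i (gamma i)) I0 t) \<longlongrightarrow> L) at_top
              \<and> L - real (card I0) \<le> lambdabar)"
proof -
  have gpos: "\<forall>i<n. \<forall>k<q i. gamma i k > 0"
  proof (intro allI impI)
    fix i k assume "i < n" "k < q i"
    then show "gamma i k > 0" using gamma_box gamma_bd by (meson less_le_trans)
  qed
  have A_nn: "\<forall>i<n. \<forall>j<n. A i j \<ge> 0" using A_01 by fastforce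
  have beta_nn: "\<forall>i<n. beta i \<ge> 0" using beta_int beta_bd by (meson less_le_trans less_imp_le)
  have delta_nn: "\<forall>i<n. delta i \<ge> 0" using delta_pos by (simp add: less_imp_le)
  have off_nn: "\<forall>i<n. \<forall>l<p. \<forall>m<p. l \<noteq> m \<longrightarrow> Pm i (gamma i) l m \<ge> 0"
  proof (intro allI impI)
    fix i l m assume "i < n" "l < p" "m < p" "l \<noteq> m"
    then show "Pm i (gamma i) l m \<ge> 0"
      using posy_nn[of "q i" "\<lambda>\<gamma>. Pm i \<gamma> l m" "gamma i"] O_posy gpos by auto
  qed
  have w_nn: "\<forall>i<n. \<forall>l<p. exitvec p (Pm i (gamma i)) l \<ge> 0"
  proof (intro allI impI)
    fix i l assume "i < n" "l < p"
    then show "exitvec p (Pm i (gamma i)) l \<ge> 0"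
      using posy_nn[of "q i" "\<lambda>\<gamma>. exitvec p (Pm i \<gamma>) l" "gamma i"] w_posy gpos by auto
  qed
  have key: "\<forall>j<n. \<forall>l<p. (\<Sum>m<p. v (j*p+m) * (if l = m then 0 else Pm j (gamma j) l m))
        + (\<Sum>i<n. v (i*p) * ((if i \<in> I0 then 0 else 1) * beta i * A i j))
        + exitvec p (Pm j (gamma j)) l + delta j < v (j*p+l) * (- Pm j (gamma j) l l + delta j)"
  proof (intro allI impI)
    fix j l assume j: "j < n" and l: "l < p"
    have c: "j*p+l < n*p" using idx_lt'[OF j l] .
    have E1: "vmul (n*p) v (dsum p p (\<lambda>i. mT (offdiag (Pm i (gamma i))))) (j*p+l)
        = (\<Sum>m<p. v (j*p+m) * (if l = m then 0 else Pm j (gamma j) l m))"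
      unfolding vmul_dsum[OF p_pos j l] mT_def offdiag_def by simp
    have E2: "vmul (n*p) v (kron p p (mmul n (mmul n (diagm (\<lambda>i. if i \<in> I0 then 0 else 1)) (diagm beta)) A)
                                      (outer u1 ones)) (j*p+l)
        = (\<Sum>i<n. v (i*p) * ((if i \<in> I0 then 0 else 1) * beta i * A i j))"
      unfolding vmul_kron[OF p_pos j l] by (rule sum.cong) (auto simp: mmul_diag)
    have E3: "vmul n ones (dsum 1 p (\<lambda>i. \<lambda>_ m. exitvec p (Pm i (gamma i)) m)) (j*p+l) = exitvec p (Pm j (gamma j)) l"
      by (rule vmul_dsum1[OF j l])
    have E4: "vmul n ones (kron 1 p (diagm delta) (\<lambda>_ _. 1)) (j*p+l) = delta j"
      by (rule vmul_kron1[OF j l])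
    have E5: "vmul (n*p) v (dsum p p (\<lambda>i. dsum 1 1 (\<lambda>l _ _. kappa i l * (- Pm i (gamma i) l l) powr alpha i l))) (j*p+l)
        = v (j*p+l) * (kappa j l * (- Pm j (gamma j) l l) powr alpha j l)"
      unfolding vmul_dsum[OF p_pos j l] using dsum11[OF l, of "\<lambda>m. v (j*p+m)" "\<lambda>l. kappa j l * (- Pm j (gamma j) l l) powr alpha j l"]
      by simp
    have mi: "(\<Sum>m<p. v (j*p+m) * (if l = m then 0 else Pm j (gamma j) l m))
        + (\<Sum>i<n. v (i*p) * ((if i \<in> I0 then 0 else 1) * beta i * A i j))
        + exitvec p (Pm j (gamma j)) l + delta j < v (j*p+l) * (kappa j l * (- Pm j (gamma j) l l) powr alpha j l)"
      using main_ineq[rule_format, OF c] unfolding vmul_madd E1 E2 E3 E4 E5 .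
    have kb: "kappa j l * (- Pm j (gamma j) l l) powr alpha j l \<le> - Pm j (gamma j) l l + delta j"
      using kappa_bound j l gamma_bd by blast
    have "v (j*p+l) * (kappa j l * (- Pm j (gamma j) l l) powr alpha j l) \<le> v (j*p+l) * (- Pm j (gamma j) l l + delta j)"
      using kb v_pos c by (intro mult_left_mono) auto
    then show "(\<Sum>m<p. v (j*p+m) * (if l = m then 0 else Pm j (gamma j) l m))
        + (\<Sum>i<n. v (i*p) * ((if i \<in> I0 then 0 else 1) * beta i * A i j))
        + exitvec p (Pm j (gamma j)) l + delta j < v (j*p+l) * (- Pm j (gamma j) l l + delta j)"
      using mi by linarith
  qed
  interpret sirp n p A beta delta "\<lambda>i. Pm i (gamma i)" I0 v
    by unfold_locales (use p_pos A_nn beta_nn delta_nn off_nn w_nn I0_sub v_pos key in simp_all)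
  obtain L where L: "((\<lambda>t. sir_ERem n p A beta delta (\<lambda>i. Pm i (gamma i)) I0 t) \<longlongrightarrow> L) at_top"
    and LV: "L \<le> Vf (sir_init n I0)"
    using main_limit by blast
  have vi: "(\<Sum>c<n*p. v c * (if c div p \<in> I0 \<and> c mod p = 0 then 1 else 0)) = (\<Sum>i<n. if i \<in> I0 then v (i*p) else 0)"
  proof -
    have "(\<Sum>c<n*p. v c * (if c div p \<in> I0 \<and> c mod p = 0 then 1 else 0))
        = (\<Sum>i<n. \<Sum>m<p. v (i*p+m) * (if (i*p+m) div p \<in> I0 \<and> (i*p+m) mod p = 0 then 1 else 0))"
      by (rule sum_np[OF p_pos])
    also have "\<dots> = (\<Sum>i<n. \<Sum>m<p. if m = 0 then (if i \<in> I0 then v (i*p) else 0) else 0)"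
      by (intro sum.cong refl) auto
    also have "\<dots> = (\<Sum>i<n. if i \<in> I0 then v (i*p) else 0)" using p_pos by simp
    finally show ?thesis .
  qed
  have "L - real (card I0) \<le> lambdabar"
    using LV v_init unfolding Vf_x0 vi by linarith
  then show ?thesis using beta_bd gamma_bd budget L by blast
qed


end
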